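(* Let $r\geq1$, $k\geq1$, $n\geq1$ be integers, $a<b$, $N=2kn$, $\bar h=(b-a)/N$, and let $f_0,\dots,f_{N-1}$ be the functions defined in the context for the partition $a_i=a+i\bar h$ of $[a,b]$ into $N$ subintervals. For $j=0,\dots,k-1$ define $\mathcal{X}_j:\{0,\dots,kn-1\}\to\{0,\dots,N-1\}$ by $\mathcal{X}_j(i)=n(k-j)+i-1$. Let $c_0,\dots,c_{k-1}$ be real numbers with $\sum_{j=0}^{k-1}c_j(\tfrac12+\tfrac{j}{2k}-x)^{k-1}=1$ for all $x\in\mathbb{R}$. Let $\lambda_0,\dots,\lambda_{kn-1}\in\mathbb{R}$ and set $$I_j=\int_a^b\int_a^{y_{k-1}}\cdots\int_a^{y_1}\sum_{i=0}^{kn-1}\lambda_i f_{\mathcal{X}_j(i)}(y_0)\,dy_0\cdots dy_{k-1}.$$ Then $$\sum_{j=0}^{k-1}c_jI_j=\bar h^{\,r+1}(b-a)^{k-1}\frac{1}{(k-1)!}\varphi_r^1\sum_{i=0}^{kn-1}\lambda_i=(kn)^{-r}(b-a)^{k+r}2^{-r-1}\frac{\varphi_r^1}{(k-1)!}\cdot\frac{1}{kn}\sum_{i=0}^{kn-1}\lambda_i.$$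
   Context: $U_s$ is the Chebyshev polynomial of the second kind of degree $s$; $(x-t)_+^{s}=(x-t)^{s}$ for $x\geq t$ and $0$ otherwise. $\psi_{r+1}(x)=\frac{1}{r!}\int_{-1}^1(x-t)_+^{r}\,\mathrm{sgn}\,U_{r+1}(t)\,dt$. For a constant $\alpha$ and interval $[c,d]$, $\varphi_r([c,d],x)=\alpha\left(\frac{d-c}{2}\right)^r\psi_{r+1}\!\left(\frac{2x-d-c}{d-c}\right)$ for $x\in[c,d]$. $\varphi_r^1=\left(\tfrac12\right)^{r+1}\frac{\alpha}{(r+1)!}\int_{-1}^1(1-t)^{r+1}\,\mathrm{sgn}\,U_{r+1}(t)\,dt$. For $i=0,\dots,N-1$, $f_i(x)=\varphi_r([a_i,a_{i+1}],x)$ for $x\in[a_i,a_{i+1}]$ and $f_i(x)=0$ otherwise. *)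

theory Defs
  imports "HOL-Analysis.Analysis"
begin

fun chebU :: "nat \<Rightarrow> real \<Rightarrow> real" where
  "chebU 0 x = 1"
| "chebU (Suc 0) x = 2 * x"
| "chebU (Suc (Suc s)) x = 2 * x * chebU (Suc s) x - chebU s x"

definition trunc_pow :: "nat \<Rightarrow> real \<Rightarrow> real \<Rightarrow> real" where
  "trunc_pow s x t = (if x \<ge> t then (x - t) ^ s else 0)"

text \<open>psi r x is the paper's psi_{r+1}(x).\<close>
definition psi :: "nat \<Rightarrow> real \<Rightarrow> real" where
  "psi r x = (1 / fact r) * integral {-1..1} (\<lambda>t. trunc_pow r x t * sgn (chebU (r + 1) t))"

definition phi :: "real \<Rightarrow> nat \<Rightarrow> real \<Rightarrow> real \<Rightarrow> real \<Rightarrow> real" where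
  "phi \<alpha> r c d x = \<alpha> * ((d - c) / 2) ^ r * psi r ((2 * x - d - c) / (d - c))"

definition phi1 :: "real \<Rightarrow> nat \<Rightarrow> real" where
  "phi1 \<alpha> r = (1 / 2) ^ (r + 1) * (\<alpha> / fact (r + 1)) *
     integral {-1..1} (\<lambda>t. (1 - t) ^ (r + 1) * sgn (chebU (r + 1) t))"

definition grid :: "real \<Rightarrow> real \<Rightarrow> nat \<Rightarrow> nat \<Rightarrow> real" where
  "grid a b N i = a + real i * (b - a) / real N"

definition fpiece :: "real \<Rightarrow> nat \<Rightarrow> real \<Rightarrow> real \<Rightarrow> nat \<Rightarrow> nat \<Rightarrow> real \<Rightarrow> real" where
  "fpiece \<alpha> r a b N i x =
     (if grid a b N i \<le> x \<and> x \<le> grid a b N (Suc i)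
      then phi \<alpha> r (grid a b N i) (grid a b N (Suc i)) x else 0)"

fun iter_int :: "real \<Rightarrow> nat \<Rightarrow> (real \<Rightarrow> real) \<Rightarrow> real \<Rightarrow> real" where
  "iter_int a 0 g y = g y"
| "iter_int a (Suc m) g y = integral {a..y} (iter_int a m g)"

end

theory Submission
  imports Defs
begin

lemma L2:
  fixes g :: "real \<Rightarrow> real"
  assumes gm: "g \<in> borel_measurable borel" and bd: "\<And>x. x \<in> {c..d} \<Longrightarrow> \<bar>g x\<bar> \<le> B"
  shows "set_integrable lborel {c..d} g"
  unfolding set_integrable_def
proof (rule integrableI_bounded_set_indicator[where B=B])
  show "emeasure lborel {c..d} < \<infinity>" by (simp add: emeasure_lborel_Icc_eq)
qed (use gm bd in auto)

lemma L2':
  fixes g :: "real \<Rightarrow> real"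
  assumes gm: "g \<in> borel_measurable borel" and bd: "\<And>x. x \<in> {c..d} \<Longrightarrow> \<bar>g x\<bar> \<le> B"
  shows "g integrable_on {c..d}" "(LINT x:{c..d}|lborel. g x) = integral {c..d} g"
  using set_borel_integral_eq_integral[OF L2[OF assms]] by auto

lemma aux_fub:
  fixes F :: "real \<Rightarrow> real \<Rightarrow> real"
  assumes Fm: "(\<lambda>p. F (fst p) (snd p)) \<in> borel_measurable borel"
    and bd: "\<And>x t. x \<in> {a..b} \<Longrightarrow> t \<in> {c..d} \<Longrightarrow> \<bar>F x t\<bar> \<le> B"
  shows "integrable (lborel \<Otimes>\<^sub>M lborel) (\<lambda>(x,t). indicator {a..b} x * indicator {c..d} t * F x t)"
    and "(\<integral>x. (\<integral>t. indicator {a..b} x * indicator {c..d} t * F x t \<partial>lborel) \<partial>lborel)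
          = integral {a..b} (\<lambda>x. integral {c..d} (F x))"
proof -
  have Fmp[measurable]: "(\<lambda>p. F (fst p) (snd p)) \<in> borel_measurable (borel \<Otimes>\<^sub>M borel)"
    using Fm by (simp add: borel_prod)
  have Fm2: "(\<lambda>t. F x t) \<in> borel_measurable borel" for x
  proof -
    have "(\<lambda>t. (\<lambda>p. F (fst p) (snd p)) (x, t)) \<in> borel_measurable borel"
      by measurable
    then show ?thesis by simp
  qed
  show I: "integrable (lborel \<Otimes>\<^sub>M lborel) (\<lambda>(x,t). indicator {a..b} x * indicator {c..d} t * F x t)"
  proof (rule integrableI_bounded_set[where A="{a..b} \<times> {c..d}" and B=B])
    show "{a..b} \<times> {c..d} \<in> sets (lborel \<Otimes>\<^sub>M lborel)" by simp
    show "(\<lambda>(x,t). indicator {a..b} x * indicator {c..d} t * F x t) \<in> borel_measurable (lborel \<Otimes>\<^sub>M lborel)"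
    proof -
      have "(\<lambda>p. indicator {a..b} (fst p) * indicator {c..d} (snd p) * F (fst p) (snd p)) \<in> borel_measurable (borel \<Otimes>\<^sub>M borel)"
        by measurable
      then show ?thesis by (simp add: lborel_prod borel_prod case_prod_beta')
    qed
    show "emeasure (lborel \<Otimes>\<^sub>M lborel) ({a..b} \<times> {c..d}) < \<infinity>"
      by (simp add: lborel.emeasure_pair_measure_Times emeasure_lborel_Icc_eq ennreal_mult_less_top)
    show "AE x in lborel \<Otimes>\<^sub>M lborel. x \<in> {a..b} \<times> {c..d} \<longrightarrow> norm ((\<lambda>(x,t). indicator {a..b} x * indicator {c..d} t * F x t) x) \<le> B"
      using bd by (auto simp: indicator_def)
    show "AE x in lborel \<Otimes>\<^sub>M lborel. x \<notin> {a..b} \<times> {c..d} \<longrightarrow> (\<lambda>(x,t). indicator {a..b} x * indicator {c..d} t * F x t) x = 0"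
      by (auto simp: indicator_def)
  qed
  have inner: "(\<integral>t. indicator {a..b} x * indicator {c..d} t * F x t \<partial>lborel)
      = indicator {a..b} x * integral {c..d} (F x)" for x
  proof (cases "x \<in> {a..b}")
    case True
    have "(\<integral>t. indicator {a..b} x * indicator {c..d} t * F x t \<partial>lborel) = (LINT t:{c..d}|lborel. F x t)"
      using True by (simp add: set_lebesgue_integral_def)
    also have "\<dots> = integral {c..d} (F x)"
      using L2'(2)[OF Fm2[of x], of c d B] bd True by auto
    finally show ?thesis using True by simp
  qed simp
  have "integrable lborel (\<lambda>x. \<integral>t. indicator {a..b} x * indicator {c..d} t * F x t \<partial>lborel)"
    using lborel_pair.integrable_fst'[OF I] by simp
  then have si: "set_integrable lborel {a..b} (\<lambda>x. integral {c..d} (F x))"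
    unfolding set_integrable_def inner by (simp add: mult.commute)
  have "(\<integral>x. (\<integral>t. indicator {a..b} x * indicator {c..d} t * F x t \<partial>lborel) \<partial>lborel)
      = (LINT x:{a..b}|lborel. integral {c..d} (F x))"
    unfolding inner set_lebesgue_integral_def by simp
  also have "\<dots> = integral {a..b} (\<lambda>x. integral {c..d} (F x))"
    using set_borel_integral_eq_integral(2)[OF si] .
  finally show "(\<integral>x. (\<integral>t. indicator {a..b} x * indicator {c..d} t * F x t \<partial>lborel) \<partial>lborel)
          = integral {a..b} (\<lambda>x. integral {c..d} (F x))" .
qed

lemma swap:
  fixes F :: "real \<Rightarrow> real \<Rightarrow> real"
  assumes Fm: "(\<lambda>p. F (fst p) (snd p)) \<in> borel_measurable borel"
    and bd: "\<And>x t. x \<in> {a..b} \<Longrightarrow> t \<in> {c..d} \<Longrightarrow> \<bar>F x t\<bar> \<le> B"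
  shows "integral {a..b} (\<lambda>x. integral {c..d} (F x)) = integral {c..d} (\<lambda>t. integral {a..b} (\<lambda>x. F x t))"
proof -
  have Fm': "(\<lambda>p. (\<lambda>t x. F x t) (fst p) (snd p)) \<in> borel_measurable borel"
  proof -
    have Fmp[measurable]: "(\<lambda>p. F (fst p) (snd p)) \<in> borel_measurable (borel \<Otimes>\<^sub>M borel)"
      using Fm by (simp add: borel_prod)
    have "(\<lambda>p. (\<lambda>p. F (fst p) (snd p)) (snd p, fst p)) \<in> borel_measurable (borel \<Otimes>\<^sub>M borel)"
      by measurable
    then have "(\<lambda>p. (\<lambda>p. F (fst p) (snd p)) (snd p, fst p)) \<in> borel_measurable borel"
      by (simp add: borel_prod)
    then show ?thesis by simp
  qed
  note A = aux_fub[OF Fm bd]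
  note B = aux_fub[OF Fm', of c d a b B]
  have "integral {a..b} (\<lambda>x. integral {c..d} (F x)) =
     (\<integral>x. (\<integral>t. indicator {a..b} x * indicator {c..d} t * F x t \<partial>lborel) \<partial>lborel)"
    using A(2) by simp
  also have "\<dots> = (\<integral>t. (\<integral>x. indicator {a..b} x * indicator {c..d} t * F x t \<partial>lborel) \<partial>lborel)"
    using lborel_pair.Fubini_integral[OF A(1)] by simp
  also have "\<dots> = (\<integral>t. (\<integral>x. indicator {c..d} t * indicator {a..b} x * F x t \<partial>lborel) \<partial>lborel)"
    by (simp add: mult.commute mult.left_commute)
  also have "\<dots> = integral {c..d} (\<lambda>t. integral {a..b} (\<lambda>x. F x t))"
    using B(2) bd by auto
  finally show ?thesis .
qed


lemma powint:
  fixes t y :: real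
  assumes "t \<le> y"
  shows "integral {t..y} (\<lambda>s. (s - t) ^ m) = (y - t) ^ Suc m / real (Suc m)"
proof -
  have "((\<lambda>s. (s - t) ^ m) has_integral ((\<lambda>s. (s - t) ^ Suc m / real (Suc m)) y - (\<lambda>s. (s - t) ^ Suc m / real (Suc m)) t)) {t..y}"
  proof (rule fundamental_theorem_of_calculus[OF assms])
    fix x assume "x \<in> {t..y}"
    show "((\<lambda>s. (s - t) ^ Suc m / real (Suc m)) has_vector_derivative (x - t) ^ m) (at x within {t..y})"
      unfolding has_real_derivative_iff_has_vector_derivative[symmetric]
      by (rule derivative_eq_intros refl | simp)+
  qed
  then show ?thesis by (simp add: integral_unique)
qed

lemma cauchy:
  fixes g :: "real \<Rightarrow> real"
  assumes gm[measurable]: "g \<in> borel_measurable borel" and bd: "\<And>x. \<bar>g x\<bar> \<le> B"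
  shows "a \<le> y \<Longrightarrow> iter_int a (Suc m) g y = integral {a..y} (\<lambda>t. (y - t) ^ m / fact m * g t)"
proof (induction m arbitrary: y)
  case 0
  have "iter_int a 0 g = g" by (rule ext) simp
  then show ?case by simp
next
  case (Suc m)
  define F where "F = (\<lambda>s t. if t \<in> {a..s} then (s - t) ^ m / fact m * g t else 0)"
  have "iter_int a (Suc (Suc m)) g y = integral {a..y} (iter_int a (Suc m) g)" by simp
  also have "\<dots> = integral {a..y} (\<lambda>s. integral {a..s} (\<lambda>t. (s - t) ^ m / fact m * g t))"
    by (rule integral_cong) (use Suc.IH in auto)
  also have "\<dots> = integral {a..y} (\<lambda>s. integral {a..y} (F s))"
  proof (rule integral_cong)
    fix s assume s: "s \<in> {a..y}"
    have "integral {a..y} (F s) = integral ({a..s} \<inter> {a..y}) (\<lambda>t. (s - t) ^ m / fact m * g t)"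
      unfolding F_def by (rule Henstock_Kurzweil_Integration.integral_restrict_Int)
    also have "{a..s} \<inter> {a..y} = {a..s}" using s by auto
    finally show "integral {a..s} (\<lambda>t. (s - t) ^ m / fact m * g t) = integral {a..y} (F s)" by simp
  qed
  also have "\<dots> = integral {a..y} (\<lambda>t. integral {a..y} (\<lambda>s. F s t))"
  proof (rule swap[where B="(y - a) ^ m / fact m * B"])
    have "(\<lambda>p. if a \<le> snd p \<and> snd p \<le> fst p then (fst p - snd p) ^ m / fact m * g (snd p) else 0)
       \<in> borel_measurable (borel \<Otimes>\<^sub>M borel)"
      by measurable
    then show "(\<lambda>p. F (fst p) (snd p)) \<in> borel_measurable borel"
      by (simp add: F_def borel_prod)
  next
    fix s t assume st: "s \<in> {a..y}" "t \<in> {a..y}"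
    show "\<bar>F s t\<bar> \<le> (y - a) ^ m / fact m * B"
    proof (cases "t \<in> {a..s}")
      case True
      have "\<bar>(s - t) ^ m\<bar> \<le> (y - a) ^ m"
        unfolding power_abs using st True by (intro power_mono) auto
      then have "\<bar>(s - t) ^ m\<bar> * \<bar>g t\<bar> \<le> (y - a) ^ m * B"
        using bd[of t] by (intro mult_mono) auto
      then show ?thesis using True by (simp add: F_def abs_mult divide_right_mono)
    next
      case False
      have "0 \<le> B" using bd[of 0] by linarith
      then show ?thesis using False st by (simp add: F_def)
    qed
  qed
  also have "\<dots> = integral {a..y} (\<lambda>t. (y - t) ^ Suc m / fact (Suc m) * g t)"
  proof (rule integral_cong)
    fix t assume t: "t \<in> {a..y}"
    have "integral {a..y} (\<lambda>s. F s t) = integral {a..y} (\<lambda>s. if s \<in> {t..} then (s - t) ^ m * (g t / fact m) else 0)"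
      by (rule integral_cong) (use t in \<open>auto simp: F_def\<close>)
    also have "\<dots> = integral ({t..} \<inter> {a..y}) (\<lambda>s. (s - t) ^ m * (g t / fact m))"
      by (rule Henstock_Kurzweil_Integration.integral_restrict_Int)
    also have "{t..} \<inter> {a..y} = {t..y}" using t by auto
    also have "integral {t..y} (\<lambda>s. (s - t) ^ m * (g t / fact m)) = integral {t..y} (\<lambda>s. (s - t) ^ m) * (g t / fact m)"
      by (rule integral_mult_left)
    also have "\<dots> = (y - t) ^ Suc m / fact (Suc m) * g t"
      using t by (simp add: powint field_simps)
    finally show "integral {a..y} (\<lambda>s. F s t) = (y - t) ^ Suc m / fact (Suc m) * g t" .
  qed
  finally show ?case .
qed


lemma chebU_cont2: "continuous_on UNIV (chebU n) \<and> continuous_on UNIV (chebU (Suc n))"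
proof (induction n)
  case 0
  then show ?case by (auto intro!: continuous_intros)
next
  case (Suc n)
  then show ?case by (auto intro!: continuous_intros)
qed

lemma chebU_cont: "continuous_on UNIV (chebU n)"
  using chebU_cont2 by blast

lemma chebU_meas[measurable]: "chebU n \<in> borel_measurable borel"
  by (rule borel_measurable_continuous_onI[OF chebU_cont])

lemma H_meas:
  "(\<lambda>p. trunc_pow r (fst p) (snd p) * sgn (chebU (r + 1) (snd p))) \<in> borel_measurable (borel \<Otimes>\<^sub>M borel)"
  unfolding trunc_pow_def by measurable

lemma H_meas': "(\<lambda>p. trunc_pow r (fst p) (snd p) * sgn (chebU (r + 1) (snd p))) \<in> borel_measurable borel"
  using H_meas by (simp add: borel_prod)

lemma H_meas1: "(\<lambda>t. trunc_pow r x t * sgn (chebU (r + 1) t)) \<in> borel_measurable borel"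
  unfolding trunc_pow_def by measurable

lemma H_bound:
  assumes "t \<in> {-1..1}"
  shows "\<bar>trunc_pow r x t * sgn (chebU (r + 1) t)\<bar> \<le> (\<bar>x\<bar> + 1) ^ r"
proof -
  have "\<bar>trunc_pow r x t\<bar> \<le> (\<bar>x\<bar> + 1) ^ r"
    unfolding trunc_pow_def using assms
    by (auto simp: power_abs intro!: power_mono)
  moreover have "\<bar>sgn (chebU (r + 1) t)\<bar> \<le> 1" by (simp add: abs_sgn_eq)
  ultimately have "\<bar>trunc_pow r x t\<bar> * \<bar>sgn (chebU (r + 1) t)\<bar> \<le> (\<bar>x\<bar> + 1) ^ r * 1"
    by (intro mult_mono) auto
  then show ?thesis by (simp add: abs_mult)
qed

lemma H_bound2:
  assumes "t \<in> {-1..1}" "x \<in> {-1..1}"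
  shows "\<bar>trunc_pow r x t * sgn (chebU (r + 1) t)\<bar> \<le> 2 ^ r"
proof -
  have "(\<bar>x\<bar> + 1) ^ r \<le> 2 ^ r" using assms by (intro power_mono) auto
  then show ?thesis using H_bound[OF assms(1), of r x] by linarith
qed

lemma psi_meas[measurable]: "psi r \<in> borel_measurable borel"
proof -
  have eq: "psi r x = 1 / fact r * (\<integral>t. indicator {-1..1} t * (trunc_pow r x t * sgn (chebU (r + 1) t)) \<partial>lborel)" for x
  proof -
    have "integral {-1..1} (\<lambda>t. trunc_pow r x t * sgn (chebU (r + 1) t))
        = (LINT t:{-1..1}|lborel. trunc_pow r x t * sgn (chebU (r + 1) t))"
      using L2'(2)[OF H_meas1 H_bound] by simp
    then show ?thesis unfolding psi_def set_lebesgue_integral_def by simp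
  qed
  have "(\<lambda>p. indicator {-1..1} (snd p) * (trunc_pow r (fst p) (snd p) * sgn (chebU (r + 1) (snd p))))
     \<in> borel_measurable (borel \<Otimes>\<^sub>M borel)"
    unfolding trunc_pow_def by measurable
  then have m: "(\<lambda>(x, t). indicator {-1..1} t * (trunc_pow r x t * sgn (chebU (r + 1) t)))
     \<in> borel_measurable (lborel \<Otimes>\<^sub>M lborel)"
    by (simp add: lborel_prod borel_prod case_prod_beta')
  have "(\<lambda>x. \<integral>t. indicator {-1..1} t * (trunc_pow r x t * sgn (chebU (r + 1) t)) \<partial>lborel) \<in> borel_measurable lborel"
    using lborel.borel_measurable_lebesgue_integral[OF m] by simp
  then have "(\<lambda>x. 1 / fact r * (\<integral>t. indicator {-1..1} t * (trunc_pow r x t * sgn (chebU (r + 1) t)) \<partial>lborel)) \<in> borel_measurable borel"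
    by simp
  then show ?thesis using eq by (metis (no_types, lifting) ext)
qed

lemma psi_bound:
  assumes "x \<in> {-1..1}"
  shows "\<bar>psi r x\<bar> \<le> 2 ^ r * 2 / fact r"
proof -
  have int: "((\<lambda>t. trunc_pow r x t * sgn (chebU (r + 1) t)) has_integral
      integral {-1..1} (\<lambda>t. trunc_pow r x t * sgn (chebU (r + 1) t))) (cbox (-1) 1)"
    using L2'(1)[OF H_meas1 H_bound] by (simp add: integrable_integral)
  have "norm (integral {-1..1} (\<lambda>t. trunc_pow r x t * sgn (chebU (r + 1) t))) \<le> 2 ^ r * measure lborel (cbox (-1::real) 1)"
    by (rule has_integral_bound[OF _ int]) (use H_bound2 assms in auto)
  then have "\<bar>integral {-1..1} (\<lambda>t. trunc_pow r x t * sgn (chebU (r + 1) t))\<bar> \<le> 2 ^ r * 2" by simp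
  then show ?thesis unfolding psi_def by (simp add: abs_mult divide_right_mono)
qed

lemma psi_int:
  "integral {-1..1} (psi r) = 1 / fact (r + 1) * integral {-1..1} (\<lambda>t. (1 - t) ^ (r + 1) * sgn (chebU (r + 1) t))"
proof -
  let ?H = "\<lambda>x t. trunc_pow r x t * sgn (chebU (r + 1) t)"
  have "integral {-1..1} (psi r) = integral {-1..1} (\<lambda>x. 1 / fact r * integral {-1..1} (?H x))"
    unfolding psi_def by simp
  also have "\<dots> = 1 / fact r * integral {-1..1} (\<lambda>x. integral {-1..1} (?H x))"
    by (rule integral_mult_right)
  also have "integral {-1..1} (\<lambda>x. integral {-1..1} (?H x)) = integral {-1..1} (\<lambda>t. integral {-1..1} (\<lambda>x. ?H x t))"
    by (rule swap[OF H_meas' H_bound2])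
  also have "\<dots> = integral {-1..1} (\<lambda>t. 1 / real (Suc r) * ((1 - t) ^ (r + 1) * sgn (chebU (r + 1) t)))"
  proof (rule integral_cong)
    fix t :: real assume t: "t \<in> {-1..1}"
    have "integral {-1..1} (\<lambda>x. ?H x t) = integral {-1..1} (\<lambda>x. if x \<in> {t..} then (x - t) ^ r * sgn (chebU (r + 1) t) else 0)"
      by (rule integral_cong) (auto simp: trunc_pow_def)
    also have "\<dots> = integral ({t..} \<inter> {-1..1}) (\<lambda>x. (x - t) ^ r * sgn (chebU (r + 1) t))"
      by (rule Henstock_Kurzweil_Integration.integral_restrict_Int)
    also have "{t..} \<inter> {-1..1} = {t..1}" using t by auto
    also have "integral {t..1} (\<lambda>x. (x - t) ^ r * sgn (chebU (r + 1) t)) = integral {t..1} (\<lambda>x. (x - t) ^ r) * sgn (chebU (r + 1) t)"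
      by (rule integral_mult_left)
    also have "\<dots> = 1 / real (Suc r) * ((1 - t) ^ (r + 1) * sgn (chebU (r + 1) t))"
      using t by (simp add: powint)
    finally show "integral {-1..1} (\<lambda>x. ?H x t) = 1 / real (Suc r) * ((1 - t) ^ (r + 1) * sgn (chebU (r + 1) t))" .
  qed
  also have "\<dots> = 1 / real (Suc r) * integral {-1..1} (\<lambda>t. (1 - t) ^ (r + 1) * sgn (chebU (r + 1) t))"
    by (rule integral_mult_right)
  finally show ?thesis by (simp add: field_simps)
qed


lemma prod_int:
  fixes P f :: "real \<Rightarrow> real"
  assumes P: "continuous_on UNIV P" and fm: "f \<in> borel_measurable borel"
    and fb: "\<And>x. x \<in> {c..d} \<Longrightarrow> \<bar>f x\<bar> \<le> B"
  shows "(\<lambda>x. P x * f x) integrable_on {c..d}"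
proof -
  have "compact (P ` {c..d})"
    by (rule compact_continuous_image[OF continuous_on_subset[OF P] compact_Icc]) auto
  then obtain M where M: "\<And>y. y \<in> P ` {c..d} \<Longrightarrow> norm y \<le> M"
    using compact_imp_bounded bounded_iff by metis
  have Pm: "P \<in> borel_measurable borel" by (rule borel_measurable_continuous_onI[OF P])
  show ?thesis
  proof (rule L2'(1)[where B="M * B"])
    show "(\<lambda>x. P x * f x) \<in> borel_measurable borel" using Pm fm by measurable
  next
    fix x assume x: "x \<in> {c..d}"
    have "\<bar>P x\<bar> \<le> M" using M[of "P x"] x by auto
    then show "\<bar>P x * f x\<bar> \<le> M * B"
      unfolding abs_mult using fb[OF x] by (intro mult_mono) auto
  qed
qed

lemma affine_int:
  fixes f :: "real \<Rightarrow> real"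
  assumes f: "f integrable_on {c..d}" and cd: "c < d"
  shows "integral {c..d} f = ((d - c) / 2) * integral {-1..1} (\<lambda>x. f ((d - c) / 2 * x + (c + d) / 2))"
proof -
  have m: "(d - c) / 2 > 0" using cd by simp
  have h: "((\<lambda>x. f (((d - c) / 2) *\<^sub>R x + (c + d) / 2)) has_integral (integral {c..d} f /\<^sub>R ((d - c) / 2) ^ DIM(real)))
     (cbox ((c - (c + d) / 2) /\<^sub>R ((d - c) / 2)) ((d - (c + d) / 2) /\<^sub>R ((d - c) / 2)))"
    by (rule has_integral_affinity'[OF _ m]) (use f in \<open>simp add: integrable_integral\<close>)
  have e1: "(c - (c + d) / 2) /\<^sub>R ((d - c) / 2) = -1" using cd by (simp add: field_simps)
  have e2: "(d - (c + d) / 2) /\<^sub>R ((d - c) / 2) = 1" using cd by (simp add: field_simps)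
  have "((\<lambda>x. f ((d - c) / 2 * x + (c + d) / 2)) has_integral (integral {c..d} f / ((d - c) / 2))) {-1..1}"
  proof -
    have q1: "(\<lambda>x. f (((d - c) / 2) *\<^sub>R x + (c + d) / 2)) = (\<lambda>x. f ((d - c) / 2 * x + (c + d) / 2))"
      by simp
    have q2: "integral {c..d} f /\<^sub>R ((d - c) / 2) ^ DIM(real) = integral {c..d} f / ((d - c) / 2)"
      by simp
    have q3: "cbox (-1) (1::real) = {-1..1}" by (rule cbox_interval)
    show ?thesis using h unfolding e1 e2 q1 q2 q3 .
  qed
  then have "integral {-1..1} (\<lambda>x. f ((d - c) / 2 * x + (c + d) / 2)) = integral {c..d} f / ((d - c) / 2)"
    by (rule integral_unique)
  then show ?thesis using m by (simp add: field_simps)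
qed


lemma grid_diff: "real N > 0 \<Longrightarrow> grid a b N (Suc m) - grid a b N m = (b - a) / real N"
  unfolding grid_def by (simp add: field_simps)

lemma fpiece_meas[measurable]: "fpiece \<alpha> r a b N m \<in> borel_measurable borel"
  unfolding fpiece_def phi_def by measurable

lemma fpiece_bound:
  assumes ab: "a < b" and N: "N > 0"
  shows "\<bar>fpiece \<alpha> r a b N m x\<bar> \<le> \<bar>\<alpha>\<bar> * ((b - a) / real N / 2) ^ r * (2 ^ r * 2 / fact r)"
proof (cases "grid a b N m \<le> x \<and> x \<le> grid a b N (Suc m)")
  case True
  let ?c = "grid a b N m" and ?d = "grid a b N (Suc m)"
  have dc: "?d - ?c = (b - a) / real N" using grid_diff N by simp
  have hp: "(b - a) / real N > 0" using ab N by simp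
  have dcp: "?d - ?c > 0" using dc hp by simp
  have "-1 \<le> (2 * x - ?d - ?c) / (?d - ?c)" using True dcp by (simp add: le_divide_eq)
  moreover have "(2 * x - ?d - ?c) / (?d - ?c) \<le> 1" using True dcp by (simp add: divide_le_eq)
  ultimately have "(2 * x - ?d - ?c) / (?d - ?c) \<in> {-1..1}" by simp
  then have pb: "\<bar>psi r ((2 * x - ?d - ?c) / (?d - ?c))\<bar> \<le> 2 ^ r * 2 / fact r" by (rule psi_bound)
  have "\<bar>fpiece \<alpha> r a b N m x\<bar> = \<bar>\<alpha>\<bar> * ((b - a) / real N / 2) ^ r * \<bar>psi r ((2 * x - ?d - ?c) / (?d - ?c))\<bar>"
    using True hp ab unfolding fpiece_def phi_def dc by (simp add: abs_mult power_abs)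
  also have "\<dots> \<le> \<bar>\<alpha>\<bar> * ((b - a) / real N / 2) ^ r * (2 ^ r * 2 / fact r)"
    using pb hp by (intro mult_left_mono) auto
  finally show ?thesis .
next
  case False
  have hp: "(b - a) / real N > 0" using ab N by simp
  have z: "fpiece \<alpha> r a b N m x = 0" using False unfolding fpiece_def by auto
  have "0 \<le> \<bar>\<alpha>\<bar> * ((b - a) / real N / 2) ^ r * (2 ^ r * 2 / fact r)"
    using hp by (intro mult_nonneg_nonneg) auto
  then show ?thesis using z by simp
qed


theorem mainTheorem5:
  fixes r k n :: nat and a b \<alpha> :: real and c lam :: "nat \<Rightarrow> real"
  assumes "r \<ge> 1" and "k \<ge> 1" and "n \<ge> 1" and "a < b"
    and "\<forall>x::real. (\<Sum>j<k. c j * (1/2 + real j / (2 * real k) - x) ^ (k - 1)) = 1"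
  shows "(let N = 2 * k * n; h = (b - a) / real N;
              I = (\<lambda>j. iter_int a k
                     (\<lambda>y. \<Sum>i<k*n. lam i * fpiece \<alpha> r a b N (n * (k - j) + i - 1) y) b)
          in (\<Sum>j<k. c j * I j)
               = h ^ (r + 1) * (b - a) ^ (k - 1) * (1 / fact (k - 1)) * phi1 \<alpha> r * (\<Sum>i<k*n. lam i)
           \<and> h ^ (r + 1) * (b - a) ^ (k - 1) * (1 / fact (k - 1)) * phi1 \<alpha> r * (\<Sum>i<k*n. lam i)
               = (1 / real (k * n) ^ r) * (b - a) ^ (k + r) * (1 / 2 ^ (r + 1))
                 * (phi1 \<alpha> r / fact (k - 1)) * ((1 / real (k * n)) * (\<Sum>i<k*n. lam i)))"
proof -
  obtain k' where kk: "k = Suc k'" using assms(2) by (cases k) auto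
  define N where "N = 2 * k * n"
  define h where "h = (b - a) / real N"
  have Npos: "N > 0" using assms(2,3) by (simp add: N_def)
  have RN: "real N = 2 * real k * real n" by (simp add: N_def)
  have hpos: "h > 0" using Npos assms(4) by (simp add: h_def)
  have kpos: "real k > 0" "real n > 0" using assms(2,3) by auto
  define fp where "fp m = fpiece \<alpha> r a b N m" for m
  define Bf where "Bf = \<bar>\<alpha>\<bar> * ((b - a) / real N / 2) ^ r * (2 ^ r * 2 / fact r)"
  have fpb: "\<bar>fpiece \<alpha> r a b N m x\<bar> \<le> Bf" for m x
    unfolding Bf_def by (rule fpiece_bound[OF assms(4) Npos])
  define X where "X j i = n * (k - j) + i - 1" for j i
  define w where "w t = (b - t) ^ (k - 1) / fact (k - 1)" for t
  have wc: "continuous_on UNIV w" unfolding w_def by (intro continuous_intros) auto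
  define J where "J m = integral {a..b} (\<lambda>t. w t * fp m t)" for m

  have Ij: "iter_int a k (\<lambda>y. \<Sum>i<k*n. lam i * fp (X j i) y) b = (\<Sum>i<k*n. lam i * J (X j i))" for j
  proof -
    let ?g = "\<lambda>y. \<Sum>i<k*n. lam i * fp (X j i) y"
    have gm: "?g \<in> borel_measurable borel" unfolding fp_def by measurable
    have gb: "\<bar>?g y\<bar> \<le> (\<Sum>i<k*n. \<bar>lam i\<bar> * Bf)" for y
    proof -
      have "\<bar>?g y\<bar> \<le> (\<Sum>i<k*n. \<bar>lam i * fp (X j i) y\<bar>)" by (rule sum_abs)
      also have "\<dots> \<le> (\<Sum>i<k*n. \<bar>lam i\<bar> * Bf)"
        unfolding abs_mult fp_def by (intro sum_mono mult_left_mono fpb) auto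
      finally show ?thesis .
    qed
    have "iter_int a k ?g b = integral {a..b} (\<lambda>t. (b - t) ^ k' / fact k' * ?g t)"
      using cauchy[OF gm gb, of a b k'] assms(4) kk by simp
    also have "\<dots> = integral {a..b} (\<lambda>t. \<Sum>i<k*n. lam i * (w t * fp (X j i) t))"
      by (rule integral_cong) (simp add: w_def kk sum_distrib_left mult_ac)
    also have "\<dots> = (\<Sum>i<k*n. integral {a..b} (\<lambda>t. lam i * (w t * fp (X j i) t)))"
    proof (rule Henstock_Kurzweil_Integration.integral_sum)
      fix i
      have wc': "continuous_on UNIV (\<lambda>t. lam i * w t)" using wc by (intro continuous_intros)
      have "(\<lambda>t. lam i * w t * fpiece \<alpha> r a b N (X j i) t) integrable_on {a..b}"
        by (rule prod_int[OF wc' fpiece_meas fpb])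
      then show "(\<lambda>t. lam i * (w t * fp (X j i) t)) integrable_on {a..b}"
        by (rule integrable_eq) (simp add: fp_def mult_ac)
    qed simp
    also have "\<dots> = (\<Sum>i<k*n. lam i * J (X j i))"
      unfolding J_def by (intro sum.cong refl integral_mult_right)
    finally show ?thesis .
  qed

  have Jform: "J m = (h / 2) * (\<alpha> * (h / 2) ^ r) *
      integral {-1..1} (\<lambda>x. w (h / 2 * x + (grid a b N m + grid a b N (Suc m)) / 2) * psi r x)"
    if mN: "m < N" for m
  proof -
    let ?c = "grid a b N m" and ?d = "grid a b N (Suc m)"
    have dc: "?d - ?c = h" using grid_diff[of N a b m] Npos by (simp add: h_def)
    have ac: "a \<le> ?c" unfolding grid_def using assms(4) Npos by simp
    have "real (Suc m) * (b - a) \<le> real N * (b - a)"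
      using mN assms(4) by (intro mult_right_mono) auto
    then have "real (Suc m) * (b - a) / real N \<le> b - a"
      using Npos by (simp add: pos_divide_le_eq mult.commute)
    then have db: "?d \<le> b" unfolding grid_def by simp
    have cd: "?c < ?d" using dc hpos by simp
    have "J m = integral {a..b} (\<lambda>t. if t \<in> {?c..?d} then w t * phi \<alpha> r ?c ?d t else 0)"
      unfolding J_def fp_def fpiece_def by (rule integral_cong) auto
    also have "\<dots> = integral ({?c..?d} \<inter> {a..b}) (\<lambda>t. w t * phi \<alpha> r ?c ?d t)"
      by (rule Henstock_Kurzweil_Integration.integral_restrict_Int)
    also have "{?c..?d} \<inter> {a..b} = {?c..?d}" using ac db by auto
    also have "integral {?c..?d} (\<lambda>t. w t * phi \<alpha> r ?c ?d t) = ((?d - ?c) / 2) *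
       integral {-1..1} (\<lambda>x. w ((?d - ?c) / 2 * x + (?c + ?d) / 2) * phi \<alpha> r ?c ?d ((?d - ?c) / 2 * x + (?c + ?d) / 2))"
    proof (rule affine_int[OF _ cd])
      have "(\<lambda>t. w t * fpiece \<alpha> r a b N m t) integrable_on {?c..?d}"
        by (rule prod_int[OF wc fpiece_meas fpb])
      then show "(\<lambda>t. w t * phi \<alpha> r ?c ?d t) integrable_on {?c..?d}"
        by (rule integrable_eq) (simp add: fpiece_def)
    qed
    also have "\<dots> = (h / 2) * integral {-1..1} (\<lambda>x. (\<alpha> * (h / 2) ^ r) * (w (h / 2 * x + (?c + ?d) / 2) * psi r x))"
    proof -
      have "phi \<alpha> r ?c ?d ((?d - ?c) / 2 * x + (?c + ?d) / 2) = \<alpha> * (h / 2) ^ r * psi r x" for x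
      proof -
        have arg: "(2 * ((?d - ?c) / 2 * x + (?c + ?d) / 2) - ?d - ?c) / (?d - ?c) = x"
          using cd by (simp add: field_simps)
        show ?thesis unfolding phi_def arg using dc by simp
      qed
      then show ?thesis using dc by (simp add: mult_ac)
    qed
    also have "\<dots> = (h / 2) * (\<alpha> * (h / 2) ^ r) *
      integral {-1..1} (\<lambda>x. w (h / 2 * x + (?c + ?d) / 2) * psi r x)"
      by (simp add: integral_mult_right)
    finally show ?thesis .
  qed

  define C where "C = (h / 2) * (\<alpha> * (h / 2) ^ r) * ((b - a) ^ (k - 1) / fact (k - 1)) * integral {-1..1} (psi r)"

  have key: "(\<Sum>j<k. c j * J (X j i)) = C" if iK: "i < k * n" for i
  proof -
    have XN: "X j i < N" if "j < k" for j
    proof -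
      have h1: "n * (k - j) \<le> k * n" by (simp add: mult.commute)
      have "n * (k - j) + i - 1 < k * n + k * n" using h1 iK by arith
      moreover have "N = k * n + k * n" unfolding N_def by simp
      ultimately show ?thesis unfolding X_def by simp
    qed
    have RX: "real (X j i) = real n * (real k - real j) + real i - 1" if "j < k" for j
    proof -
      have "1 \<le> n * (k - j)" using that assms(3) by (simp add: Suc_le_eq)
      then have g1: "1 \<le> n * (k - j) + i" by (rule order_trans[OF _ le_add1])
      have A: "real (n * (k - j) + i - 1) = real (n * (k - j) + i) - real 1"
        by (rule of_nat_diff[OF g1])
      have B: "real (k - j) = real k - real j" using that by (simp add: of_nat_diff)
      show ?thesis unfolding X_def A of_nat_add of_nat_mult B by simp
    qed
    define M where "M j = (grid a b N (X j i) + grid a b N (Suc (X j i))) / 2" for j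
    have mid: "b - (h / 2 * x + M j) = (b - a) * (1 / 2 + real j / (2 * real k) - (real i - 1 / 2 + x / 2) / (2 * real k * real n))"
      if "j < k" for j x
      unfolding M_def grid_def h_def RN of_nat_Suc RX[OF that] using kpos
      by (simp add: field_simps)
    have wsum: "(\<Sum>j<k. c j * w (h / 2 * x + M j)) = (b - a) ^ (k - 1) / fact (k - 1)" for x
    proof -
      have "(\<Sum>j<k. c j * w (h / 2 * x + M j)) =
         (\<Sum>j<k. (b - a) ^ (k - 1) / fact (k - 1) * (c j * (1 / 2 + real j / (2 * real k) - (real i - 1 / 2 + x / 2) / (2 * real k * real n)) ^ (k - 1)))"
      proof (rule sum.cong[OF refl])
        fix j assume "j \<in> {..<k}"
        then have j: "j < k" by simp
        have "w (h / 2 * x + M j) = ((b - a) * (1 / 2 + real j / (2 * real k) - (real i - 1 / 2 + x / 2) / (2 * real k * real n))) ^ (k - 1) / fact (k - 1)"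
          unfolding w_def mid[OF j] ..
        then show "c j * w (h / 2 * x + M j) = (b - a) ^ (k - 1) / fact (k - 1) * (c j * (1 / 2 + real j / (2 * real k) - (real i - 1 / 2 + x / 2) / (2 * real k * real n)) ^ (k - 1))"
          by (simp add: power_mult_distrib)
      qed
      also have "\<dots> = (b - a) ^ (k - 1) / fact (k - 1)"
      proof -
        have "(\<Sum>j<k. c j * (1 / 2 + real j / (2 * real k) - (real i - 1 / 2 + x / 2) / (2 * real k * real n)) ^ (k - 1)) = 1"
          using assms(5) by blast
        then show ?thesis by (simp only: sum_distrib_left[symmetric])
      qed
      finally show ?thesis .
    qed
    have pb: "\<bar>psi r x\<bar> \<le> 2 ^ r * 2 / fact r" if "x \<in> {-1..1}" for x
      using psi_bound[OF that] .
    have "(\<Sum>j<k. c j * J (X j i)) =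
       (\<Sum>j<k. (h / 2) * (\<alpha> * (h / 2) ^ r) * integral {-1..1} (\<lambda>x. c j * (w (h / 2 * x + M j) * psi r x)))"
      by (rule sum.cong) (auto simp: Jform XN M_def integral_mult_right)
    also have "\<dots> = (h / 2) * (\<alpha> * (h / 2) ^ r) * (\<Sum>j<k. integral {-1..1} (\<lambda>x. c j * (w (h / 2 * x + M j) * psi r x)))"
      by (simp add: sum_distrib_left)
    also have "(\<Sum>j<k. integral {-1..1} (\<lambda>x. c j * (w (h / 2 * x + M j) * psi r x)))
       = integral {-1..1} (\<lambda>x. \<Sum>j<k. c j * (w (h / 2 * x + M j) * psi r x))"
    proof (rule Henstock_Kurzweil_Integration.integral_sum[symmetric])
      fix j
      have P: "continuous_on UNIV (\<lambda>x. c j * w (h / 2 * x + M j))"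
        by (intro continuous_intros continuous_on_compose2[OF wc]) auto
      have "(\<lambda>x. c j * w (h / 2 * x + M j) * psi r x) integrable_on {-1..1}"
        by (rule prod_int[OF P psi_meas pb])
      then show "(\<lambda>x. c j * (w (h / 2 * x + M j) * psi r x)) integrable_on {-1..1}"
        by (rule integrable_eq) (simp add: mult_ac)
    qed simp
    also have "\<dots> = integral {-1..1} (\<lambda>x. (b - a) ^ (k - 1) / fact (k - 1) * psi r x)"
    proof (rule integral_cong)
      fix x
      have "(\<Sum>j<k. c j * (w (h / 2 * x + M j) * psi r x)) = (\<Sum>j<k. c j * w (h / 2 * x + M j)) * psi r x"
        by (simp only: sum_distrib_right mult.assoc)
      then show "(\<Sum>j<k. c j * (w (h / 2 * x + M j) * psi r x)) = (b - a) ^ (k - 1) / fact (k - 1) * psi r x"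
        using wsum by simp
    qed
    also have "\<dots> = (b - a) ^ (k - 1) / fact (k - 1) * integral {-1..1} (psi r)"
      by (rule integral_mult_right)
    finally show ?thesis unfolding C_def by (simp add: mult_ac)
  qed

  have S: "(\<Sum>j<k. c j * iter_int a k (\<lambda>y. \<Sum>i<k*n. lam i * fp (X j i) y) b) = C * (\<Sum>i<k*n. lam i)"
  proof -
    have "(\<Sum>j<k. c j * iter_int a k (\<lambda>y. \<Sum>i<k*n. lam i * fp (X j i) y) b)
        = (\<Sum>j<k. \<Sum>i<k*n. c j * (lam i * J (X j i)))"
      by (simp add: Ij sum_distrib_left)
    also have "\<dots> = (\<Sum>i<k*n. \<Sum>j<k. c j * (lam i * J (X j i)))"
      by (rule sum.swap)
    also have "\<dots> = (\<Sum>i<k*n. lam i * (\<Sum>j<k. c j * J (X j i)))"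
      by (simp add: sum_distrib_left mult_ac)
    also have "\<dots> = (\<Sum>i<k*n. lam i * C)"
      by (rule sum.cong) (auto simp: key)
    also have "\<dots> = C * (\<Sum>i<k*n. lam i)"
      by (simp add: sum_distrib_left mult.commute)
    finally show ?thesis .
  qed

  have C_eq: "C = h ^ (r + 1) * (b - a) ^ (k - 1) * (1 / fact (k - 1)) * phi1 \<alpha> r"
    unfolding C_def phi1_def psi_int by (simp add: power_divide field_simps)

  have second: "h ^ (r + 1) * (b - a) ^ (k - 1) * (1 / fact (k - 1)) * phi1 \<alpha> r * (\<Sum>i<k*n. lam i)
               = (1 / real (k * n) ^ r) * (b - a) ^ (k + r) * (1 / 2 ^ (r + 1))
                 * (phi1 \<alpha> r / fact (k - 1)) * ((1 / real (k * n)) * (\<Sum>i<k*n. lam i))"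
  proof -
    have hh: "h ^ (r + 1) = (b - a) ^ (r + 1) / (2 ^ (r + 1) * real (k * n) ^ r * real (k * n))"
      unfolding h_def RN by (simp add: power_divide power_mult_distrib field_simps)
    have ba: "(b - a) ^ (k + r) = (b - a) ^ (r + 1) * (b - a) ^ (k - 1)"
      unfolding power_add[symmetric] using kk by (simp add: add.commute)
    show ?thesis unfolding hh ba by (simp add: field_simps)
  qed

  show ?thesis
    unfolding Let_def N_def[symmetric] h_def[symmetric]
    using S C_eq second unfolding fp_def X_def by simp
qed


end
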